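(* For $m=3$ objects, the game for SumLoss with top-1 feedback and binary relevance (loss matrix $L$ and feedback matrix $H$ as in the context) does not satisfy the local observability condition: there exists a pair of neighboring actions $i,j$ such that $\ell_i-\ell_j\notin\bigoplus_{k\in N^+_{i,j}}\mathrm{Col}(S_k^\top)$.
   Context: Objects are $\{1,\dots,m\}$. Learner actions are permutations $\sigma_1,\dots,\sigma_{m!}$ of $[m]$ ($\sigma(i)$ = rank of object $i$, $\sigma^{-1}(j)$ = object at rank $j$); adversary actions are $r_1,\dots,r_{2^m}$ enumerating $\{0,1\}^m$. Loss matrix: $L_{i,j}=\sum_{k=1}^m\sigma_i(k)r_j(k)$, rows $\ell_i$. Feedback matrix: $H_{i,j}=r_j(\sigma_i^{-1}(1))$. Signal matrix $S_i\in\{0,1\}^{2\times2^m}$: $(S_i)_{1,\ell}=\mathbb{1}(H_{i,\ell}=0)$, $(S_i)_{2,\ell}=\mathbb{1}(H_{i,\ell}=1)$. With $\Delta$ the probability simplex in $\mathbb{R}^{2^m}$, $C_i=\{p\in\Delta:\ell_i\cdot p\le\ell_k\cdot p\ \forall k\}$; action $i$ is Pareto-optimal if $C_i$ is non-empty and $(2^m-1)$-dimensional; Pareto-optimal $i,j$ are neighboring if $C_i\cap C_j$ is a $(2^m-2)$-dimensional polytope, and then $N^+_{i,j}=\{k\in[m!]:C_i\cap C_j\subseteq C_k\}$. A neighboring pair $i,j$ is locally observable if $\ell_i-\ell_j\in\bigoplus_{k\in N^+_{i,j}}\mathrm{Col}(S_k^\top)$; local observability holds if every neighboring pair is locally observable.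 *)

theory Defs
  imports "HOL-Analysis.Analysis"
begin

text \<open>Objects form a finite type 'o with m = CARD('o) elements.
  A learner action is a ranking sigma :: 'o => nat, a bijection onto {1..m}
  (sigma k = rank of object k).  Adversary actions are relevance vectors
  r :: 'o => bool (r k = True meaning relevance 1); there are 2^m of them.
  Vectors in R^(2^m) are indexed by the adversary actions: real ^ ('o => bool).\<close>

definition learner_actions :: "('o::finite \<Rightarrow> nat) set" where
  "learner_actions = {\<sigma>. bij_betw \<sigma> UNIV {1..CARD('o)}}"

definition rel :: "bool \<Rightarrow> real" where
  "rel b = (if b then 1 else 0)"

definition loss_vec :: "('o::finite \<Rightarrow> nat) \<Rightarrow> real ^ ('o \<Rightarrow> bool)" where
  "loss_vec \<sigma> = (\<chi> r. \<Sum>k\<in>UNIV. real (\<sigma> k) * rel (r k))"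

definition feedback :: "('o::finite \<Rightarrow> nat) \<Rightarrow> ('o \<Rightarrow> bool) \<Rightarrow> real" where
  "feedback \<sigma> r = rel (r (inv_into UNIV \<sigma> 1))"

definition signal_matrix :: "('o::finite \<Rightarrow> nat) \<Rightarrow> real ^ ('o \<Rightarrow> bool) ^ 2" where
  "signal_matrix \<sigma> = (\<chi> a r. if a = 1 then (if feedback \<sigma> r = 0 then 1 else 0)
                                      else (if feedback \<sigma> r = 1 then 1 else 0))"

definition col_space :: "real ^ 'n ^ 'm \<Rightarrow> (real ^ 'm) set" where
  "col_space A = range (\<lambda>x. A *v x)"

definition prob_simplex :: "(real ^ 'r::finite) set" where
  "prob_simplex = {p. (\<forall>r. 0 \<le> p $ r) \<and> (\<Sum>r\<in>UNIV. p $ r) = 1}"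

definition cell :: "('o::finite \<Rightarrow> nat) \<Rightarrow> (real ^ ('o \<Rightarrow> bool)) set" where
  "cell \<sigma> = {p \<in> prob_simplex. \<forall>\<tau>\<in>learner_actions. loss_vec \<sigma> \<bullet> p \<le> loss_vec \<tau> \<bullet> p}"

definition pareto_optimal :: "('o::finite \<Rightarrow> nat) \<Rightarrow> bool" where
  "pareto_optimal \<sigma> \<longleftrightarrow> \<sigma> \<in> learner_actions \<and> cell \<sigma> \<noteq> {} \<and>
     aff_dim (cell \<sigma>) = int (CARD('o \<Rightarrow> bool)) - 1"

text \<open>C_i \<inter> C_j is an intersection of finitely many halfspaces with the simplex, hence
  always a polytope; the condition is that it has dimension 2^m - 2.\<close>
definition neighboring :: "('o::finite \<Rightarrow> nat) \<Rightarrow> ('o \<Rightarrow> nat) \<Rightarrow> bool" where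
  "neighboring \<sigma> \<tau> \<longleftrightarrow> pareto_optimal \<sigma> \<and> pareto_optimal \<tau> \<and>
     cell \<sigma> \<inter> cell \<tau> \<noteq> {} \<and>
     aff_dim (cell \<sigma> \<inter> cell \<tau>) = int (CARD('o \<Rightarrow> bool)) - 2"

definition neighborhood_plus :: "('o::finite \<Rightarrow> nat) \<Rightarrow> ('o \<Rightarrow> nat) \<Rightarrow> ('o \<Rightarrow> nat) set" where
  "neighborhood_plus \<sigma> \<tau> = {\<kappa> \<in> learner_actions. cell \<sigma> \<inter> cell \<tau> \<subseteq> cell \<kappa>}"

text \<open>Sum (written as a direct sum in the paper) of the subspaces Col(S_k^T), k in N.\<close>
definition signal_sum :: "('o::finite \<Rightarrow> nat) set \<Rightarrow> (real ^ ('o \<Rightarrow> bool)) set" where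
  "signal_sum N = span (\<Union>\<kappa>\<in>N. col_space (transpose (signal_matrix \<kappa>)))"

definition locally_observable_pair :: "('o::finite \<Rightarrow> nat) \<Rightarrow> ('o \<Rightarrow> nat) \<Rightarrow> bool" where
  "locally_observable_pair \<sigma> \<tau> \<longleftrightarrow>
     loss_vec \<sigma> - loss_vec \<tau> \<in> signal_sum (neighborhood_plus \<sigma> \<tau>)"

definition local_observability :: "'o::finite itself \<Rightarrow> bool" where
  "local_observability _ \<longleftrightarrow>
     (\<forall>\<sigma> \<tau> :: 'o \<Rightarrow> nat. neighboring \<sigma> \<tau> \<longrightarrow> locally_observable_pair \<sigma> \<tau>)"

end

theory Submission imports Defs begin

definition mk :: "bool \<Rightarrow> bool \<Rightarrow> bool \<Rightarrow> (3 \<Rightarrow> bool)" where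
  "mk a b c = (\<lambda>k. if k = 1 then a else if k = 2 then b else c)"

lemma ne3: "(1::3) \<noteq> 2" "(1::3) \<noteq> 3" "(2::3) \<noteq> 3" "(2::3) \<noteq> 1" "(3::3) \<noteq> 1" "(3::3) \<noteq> 2"
  by simp_all

lemma mk_app[simp]: "mk a b c 1 = a" "mk a b c 2 = b" "mk a b c 3 = c"
  by (simp_all add: mk_def)

lemma mk_surj: "r = mk (r 1) (r 2) (r 3)"
  unfolding mk_def using exhaust_3 by (auto intro!: ext) (metis exhaust_3)+

lemma mk_inj1: "mk a b c = mk a' b' c' \<Longrightarrow> a = a' \<and> b = b' \<and> c = c'"
  by (metis mk_app(1) mk_app(2) mk_app(3))
lemma mk_inj: "mk a b c = mk a' b' c' \<longleftrightarrow> a = a' \<and> b = b' \<and> c = c'"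
  using mk_inj1 by blast

lemma prod3_sum: "(\<Sum>x\<in>(UNIV::(bool\<times>bool\<times>bool) set). h x) = (\<Sum>a\<in>UNIV. \<Sum>b\<in>UNIV. \<Sum>c\<in>UNIV. h (a,b,c))"
proof -
  have "(\<Sum>x\<in>(UNIV::(bool\<times>bool\<times>bool) set). h x) = (\<Sum>(a,bc)\<in>UNIV \<times> UNIV. h (a,bc))" by simp
  also have "\<dots> = (\<Sum>a\<in>UNIV. \<Sum>bc\<in>UNIV. h (a,bc))" by (rule sum.cartesian_product[symmetric])
  also have "\<dots> = (\<Sum>a\<in>UNIV. \<Sum>(b,c)\<in>UNIV \<times> UNIV. h (a,b,c))" by simp
  also have "\<dots> = (\<Sum>a\<in>UNIV. \<Sum>b\<in>UNIV. \<Sum>c\<in>UNIV. h (a,b,c))" by (simp add: sum.cartesian_product)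
  finally show ?thesis .
qed

lemma sum_fun3: "(\<Sum>r\<in>(UNIV::(3\<Rightarrow>bool) set). g r) =
   (\<Sum>a\<in>UNIV. \<Sum>b\<in>UNIV. \<Sum>c\<in>UNIV. g (mk a b c))"
proof -
  have b: "bij_betw (\<lambda>(a,b,c). mk a b c) UNIV (UNIV::(3\<Rightarrow>bool) set)"
    unfolding bij_betw_def inj_on_def
    by (auto simp: mk_inj) (metis mk_surj rangeI case_prod_conv)
  have "(\<Sum>r\<in>(UNIV::(3\<Rightarrow>bool) set). g r) = (\<Sum>x\<in>UNIV. g ((\<lambda>(a,b,c). mk a b c) x))"
    using sum.reindex_bij_betw[OF b, of g] by simp
  also have "\<dots> = (\<Sum>a\<in>UNIV. \<Sum>b\<in>UNIV. \<Sum>c\<in>UNIV. g (mk a b c))"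
    by (simp only: prod3_sum) simp
  finally show ?thesis .
qed


lemma sum3: "(\<Sum>k\<in>(UNIV::3 set). f k) = f 1 + f 2 + (f 3 :: real)"
  unfolding UNIV_3 by (subst sum.insert, simp, simp)+ simp

lemma nat123: "{1..3::nat} = {1,2,3}" by auto

definition q :: "3 \<Rightarrow> real ^ (3 \<Rightarrow> bool) \<Rightarrow> real" where
  "q k p = (\<Sum>r\<in>UNIV. p $ r * rel (r k))"

lemma loss_dot: "loss_vec \<kappa> \<bullet> p = real (\<kappa> 1) * q 1 p + real (\<kappa> 2) * q 2 p + real (\<kappa> 3) * q 3 p"
proof -
  have "loss_vec \<kappa> \<bullet> p = (\<Sum>r\<in>UNIV. (\<Sum>k\<in>UNIV. real (\<kappa> k) * rel (r k)) * p$r)"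
    by (simp add: loss_vec_def inner_vec_def)
  also have "\<dots> = (\<Sum>r\<in>UNIV. \<Sum>k\<in>UNIV. real (\<kappa> k) * (p$r * rel (r k)))"
    by (intro sum.cong refl) (simp add: sum_distrib_left sum_distrib_right mult_ac)
  also have "\<dots> = (\<Sum>k\<in>UNIV. \<Sum>r\<in>UNIV. real (\<kappa> k) * (p$r * rel (r k)))"
    by (rule sum.swap)
  also have "\<dots> = (\<Sum>k\<in>UNIV. real (\<kappa> k) * q k p)"
    by (simp add: q_def sum_distrib_left)
  also have "\<dots> = real (\<kappa> 1) * q 1 p + real (\<kappa> 2) * q 2 p + real (\<kappa> 3) * q 3 p"
    by (rule sum3)
  finally show ?thesis .
qed

lemma learner_cases:
  fixes \<kappa> :: "3 \<Rightarrow> nat"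
  assumes "\<kappa> \<in> learner_actions"
  shows "(\<kappa> 1 = 1 \<and> \<kappa> 2 = 2 \<and> \<kappa> 3 = 3) \<or> (\<kappa> 1 = 1 \<and> \<kappa> 2 = 3 \<and> \<kappa> 3 = 2) \<or>
         (\<kappa> 1 = 2 \<and> \<kappa> 2 = 1 \<and> \<kappa> 3 = 3) \<or> (\<kappa> 1 = 2 \<and> \<kappa> 2 = 3 \<and> \<kappa> 3 = 1) \<or>
         (\<kappa> 1 = 3 \<and> \<kappa> 2 = 1 \<and> \<kappa> 3 = 2) \<or> (\<kappa> 1 = 3 \<and> \<kappa> 2 = 2 \<and> \<kappa> 3 = 1)"
proof -
  have b: "bij_betw \<kappa> UNIV {1..3}" using assms by (simp add: learner_actions_def)
  then have r: "\<kappa> k \<in> {1..3}" for k using bij_betwE by blast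
  have i: "inj \<kappa>" using b bij_betw_imp_inj_on by blast
  have d: "\<kappa> 1 \<noteq> \<kappa> 2" "\<kappa> 1 \<noteq> \<kappa> 3" "\<kappa> 2 \<noteq> \<kappa> 3"
    using injD[OF i] ne3 by blast+
  have a: "\<kappa> k = 1 \<or> \<kappa> k = 2 \<or> \<kappa> k = 3" for k using r[of k] by (simp only: nat123 insert_iff empty_iff simp_thms)
  show ?thesis using d a[of 1] a[of 2] a[of 3] by (elim disjE; simp)
qed

lemma learner_inj: "\<kappa> \<in> learner_actions \<Longrightarrow> inj \<kappa>"
  by (simp add: learner_actions_def bij_betw_imp_inj_on)

definition \<sigma>0 :: "3 \<Rightarrow> nat" where "\<sigma>0 = (\<lambda>k. if k = 1 then 1 else if k = 2 then 2 else 3)"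
definition \<tau>0 :: "3 \<Rightarrow> nat" where "\<tau>0 = (\<lambda>k. if k = 1 then 1 else if k = 2 then 3 else 2)"

lemma \<sigma>0_vals[simp]: "\<sigma>0 1 = 1" "\<sigma>0 2 = 2" "\<sigma>0 3 = 3" by (simp_all add: \<sigma>0_def)
lemma \<tau>0_vals[simp]: "\<tau>0 1 = 1" "\<tau>0 2 = 3" "\<tau>0 3 = 2" by (simp_all add: \<tau>0_def)


lemma \<sigma>0_la: "\<sigma>0 \<in> learner_actions"
  unfolding learner_actions_def bij_betw_def mem_Collect_eq
proof
  show "inj \<sigma>0"
  proof (rule injI)
    fix x y assume "\<sigma>0 x = \<sigma>0 y"
    then show "x = y" using exhaust_3[of x] exhaust_3[of y] by auto
  qed
  have "range \<sigma>0 = \<sigma>0 ` {1,2,3}" by (simp only: UNIV_3)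
  also have "\<dots> = {1,2,3}" by auto
  finally show "range \<sigma>0 = {1..CARD(3)}" using nat123 by simp
qed

lemma \<tau>0_la: "\<tau>0 \<in> learner_actions"
  unfolding learner_actions_def bij_betw_def mem_Collect_eq
proof
  show "inj \<tau>0"
  proof (rule injI)
    fix x y assume "\<tau>0 x = \<tau>0 y"
    then show "x = y" using exhaust_3[of x] exhaust_3[of y] by auto
  qed
  have "range \<tau>0 = \<tau>0 ` {1,2,3}" by (simp only: UNIV_3)
  also have "\<dots> = {1,2,3}" by auto
  finally show "range \<tau>0 = {1..CARD(3)}" using nat123 by simp
qed

lemma opt_\<sigma>0:
  assumes "p \<in> prob_simplex" "q 2 p \<le> q 1 p" "q 3 p \<le> q 2 p"
  shows "p \<in> cell \<sigma>0"
  unfolding cell_def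
proof (intro CollectI conjI ballI)
  fix \<kappa> :: "3 \<Rightarrow> nat" assume "\<kappa> \<in> learner_actions"
  from learner_cases[OF this] assms(2,3) show "loss_vec \<sigma>0 \<bullet> p \<le> loss_vec \<kappa> \<bullet> p"
    unfolding loss_dot by (elim disjE conjE; simp; linarith)
qed (fact assms(1))

lemma opt_\<tau>0:
  assumes "p \<in> prob_simplex" "q 3 p \<le> q 1 p" "q 2 p \<le> q 3 p"
  shows "p \<in> cell \<tau>0"
  unfolding cell_def
proof (intro CollectI conjI ballI)
  fix \<kappa> :: "3 \<Rightarrow> nat" assume "\<kappa> \<in> learner_actions"
  from learner_cases[OF this] assms(2,3) show "loss_vec \<tau>0 \<bullet> p \<le> loss_vec \<kappa> \<bullet> p"
    unfolding loss_dot by (elim disjE conjE; simp; linarith)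
qed (fact assms(1))

definition one :: "real ^ (3 \<Rightarrow> bool)" where "one = (\<chi> r. 1)"
definition hh :: "real ^ (3 \<Rightarrow> bool)" where "hh = (\<chi> r. rel (r 2) - rel (r 3))"
definition AA where "AA = {x. one \<bullet> x = 1}"
definition HH where "HH = {x. hh \<bullet> x = 0}"

lemma one_dot: "one \<bullet> x = (\<Sum>r\<in>UNIV. x $ r)"
  by (simp add: one_def inner_vec_def)

lemma hh_dot: "hh \<bullet> x = q 2 x - q 3 x"
  by (simp add: hh_def q_def inner_vec_def sum_subtractf algebra_simps)

lemma simplex_AA: "prob_simplex \<subseteq> AA"
  by (auto simp: prob_simplex_def AA_def one_dot)

lemma cell_AA: "cell \<kappa> \<subseteq> AA"
  using simplex_AA by (auto simp: cell_def)

lemma AA_pos_simplex: "p \<in> AA \<Longrightarrow> \<forall>r. 0 < p $ r \<Longrightarrow> p \<in> prob_simplex"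
  by (auto simp: prob_simplex_def AA_def one_dot less_imp_le)

definition P1 :: "real ^ (3 \<Rightarrow> bool)" where "P1 = (\<chi> r. 1/16 + (if r 1 \<and> \<not> r 3 then 1/4 else 0))"
definition P2 :: "real ^ (3 \<Rightarrow> bool)" where "P2 = (\<chi> r. 1/16 + (if r 1 \<and> \<not> r 2 then 1/4 else 0))"
definition P3 :: "real ^ (3 \<Rightarrow> bool)" where "P3 = (\<chi> r. 1/16 + (if r 1 then 1/8 else 0))"
definition EE :: "real ^ (3 \<Rightarrow> bool)" where "EE = (\<chi> r. if r 1 \<and> \<not> r 2 \<and> \<not> r 3 then 1 else 0)"

lemma P1_q: "q 1 P1 = 3/4" "q 2 P1 = 1/2" "q 3 P1 = 1/4" "one \<bullet> P1 = 1" "\<forall>r. 0 < P1 $ r"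
  by (simp_all add: P1_def q_def sum_fun3 rel_def UNIV_bool one_dot)
lemma P2_q: "q 1 P2 = 3/4" "q 2 P2 = 1/4" "q 3 P2 = 1/2" "one \<bullet> P2 = 1" "\<forall>r. 0 < P2 $ r"
  by (simp_all add: P2_def q_def sum_fun3 rel_def UNIV_bool one_dot)
lemma P3_q: "q 1 P3 = 3/4" "q 2 P3 = 1/2" "q 3 P3 = 1/2" "one \<bullet> P3 = 1" "\<forall>r. 0 < P3 $ r"
  by (simp_all add: P3_def q_def sum_fun3 rel_def UNIV_bool one_dot)
lemma EE_q: "q 1 EE = 1" "q 2 EE = 0" "q 3 EE = 0" "one \<bullet> EE = 1" "\<forall>r. 0 \<le> EE $ r"
  by (simp_all add: EE_def q_def sum_fun3 rel_def UNIV_bool one_dot)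

lemma open_pos: "open {p::real^(3\<Rightarrow>bool). \<forall>r. 0 < p $ r}"
proof -
  have e: "{p::real^(3\<Rightarrow>bool). \<forall>r. 0 < p $ r} = (\<Inter>r\<in>UNIV. {p. 0 < p $ r})" by auto
  have "open {p::real^(3\<Rightarrow>bool). 0 < p $ r}" for r
    by (rule open_Collect_less) (intro continuous_on_const continuous_on_component continuous_on_id)+
  then show ?thesis unfolding e by (intro open_INT) simp_all
qed

lemma cont_q: "continuous_on UNIV (q k)"
  unfolding q_def by (intro continuous_on_sum continuous_on_mult continuous_on_const continuous_on_component continuous_on_id)

lemma open_qless: "open {p. q a p < q b p}"
  by (rule open_Collect_less) (intro cont_q)+

lemma aff_AA: "aff_dim AA = int CARD(3 \<Rightarrow> bool) - 1"
proof -
  have "one \<noteq> 0" using P1_q(4) by auto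
  then show ?thesis unfolding AA_def by simp
qed

lemma convex_AA: "convex AA" unfolding AA_def by (rule convex_hyperplane)
lemma affine_AA: "affine AA" unfolding AA_def by (rule affine_hyperplane)

lemma P_AA: "P1 \<in> AA" "P2 \<in> AA" "P3 \<in> AA" "EE \<in> AA"
  using P1_q P2_q P3_q EE_q by (auto simp: AA_def)

lemma EE_simplex: "EE \<in> prob_simplex"
  using EE_q by (auto simp: prob_simplex_def one_dot)

lemma dim_\<sigma>0: "aff_dim (cell \<sigma>0) = int CARD(3 \<Rightarrow> bool) - 1"
proof -
  define U where "U = {p. \<forall>r. 0 < p $ r} \<inter> {p. q 2 p < q 1 p} \<inter> {p. q 3 p < q 2 p}"
  have oU: "open U" unfolding U_def by (intro open_Int open_pos open_qless)
  have sub: "AA \<inter> U \<subseteq> cell \<sigma>0"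
  proof
    fix p assume "p \<in> AA \<inter> U"
    then show "p \<in> cell \<sigma>0" unfolding U_def
      by (intro opt_\<sigma>0) (auto intro: AA_pos_simplex)
  qed
  have ne: "AA \<inter> U \<noteq> {}" using P_AA(1) P1_q unfolding U_def by auto
  have "aff_dim (AA \<inter> U) = aff_dim AA" by (rule aff_dim_convex_Int_open[OF convex_AA oU ne])
  then have "aff_dim AA \<le> aff_dim (cell \<sigma>0)" using aff_dim_subset[OF sub] by simp
  moreover have "aff_dim (cell \<sigma>0) \<le> aff_dim AA" by (rule aff_dim_subset[OF cell_AA])
  ultimately show ?thesis using aff_AA by simp
qed

lemma dim_\<tau>0: "aff_dim (cell \<tau>0) = int CARD(3 \<Rightarrow> bool) - 1"
proof -
  define U where "U = {p. \<forall>r. 0 < p $ r} \<inter> {p. q 3 p < q 1 p} \<inter> {p. q 2 p < q 3 p}"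
  have oU: "open U" unfolding U_def by (intro open_Int open_pos open_qless)
  have sub: "AA \<inter> U \<subseteq> cell \<tau>0"
  proof
    fix p assume "p \<in> AA \<inter> U"
    then show "p \<in> cell \<tau>0" unfolding U_def
      by (intro opt_\<tau>0) (auto intro: AA_pos_simplex)
  qed
  have ne: "AA \<inter> U \<noteq> {}" using P_AA(2) P2_q unfolding U_def by auto
  have "aff_dim (AA \<inter> U) = aff_dim AA" by (rule aff_dim_convex_Int_open[OF convex_AA oU ne])
  then have "aff_dim AA \<le> aff_dim (cell \<tau>0)" using aff_dim_subset[OF sub] by simp
  moreover have "aff_dim (cell \<tau>0) \<le> aff_dim AA" by (rule aff_dim_subset[OF cell_AA])
  ultimately show ?thesis using aff_AA by simp
qed

lemma int_sub: "cell \<sigma>0 \<inter> cell \<tau>0 \<subseteq> AA \<inter> HH"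
proof
  fix p assume p: "p \<in> cell \<sigma>0 \<inter> cell \<tau>0"
  then have "loss_vec \<sigma>0 \<bullet> p \<le> loss_vec \<tau>0 \<bullet> p" "loss_vec \<tau>0 \<bullet> p \<le> loss_vec \<sigma>0 \<bullet> p"
    using \<sigma>0_la \<tau>0_la by (auto simp: cell_def)
  then have "q 2 p = q 3 p" unfolding loss_dot by simp
  then have "p \<in> HH" by (simp add: HH_def hh_dot)
  moreover have "p \<in> AA" using p cell_AA by blast
  ultimately show "p \<in> AA \<inter> HH" by blast
qed

lemma dim_int: "aff_dim (cell \<sigma>0 \<inter> cell \<tau>0) = int CARD(3 \<Rightarrow> bool) - 2"
proof -
  have P3H: "P3 \<in> HH" using P3_q by (simp add: HH_def hh_dot)
  have P1H: "P1 \<notin> HH" using P1_q by (simp add: HH_def hh_dot)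
  have "aff_dim (AA \<inter> HH) = aff_dim AA - 1"
    using aff_dim_affine_Int_hyperplane[OF affine_AA, of hh 0] P3H P1H P_AA
    unfolding HH_def by auto
  then have dAH: "aff_dim (AA \<inter> HH) = int CARD(3 \<Rightarrow> bool) - 2" using aff_AA by simp
  define U where "U = {p. \<forall>r. 0 < p $ r} \<inter> {p. q 2 p < q 1 p}"
  have oU: "open U" unfolding U_def by (intro open_Int open_pos open_qless)
  have sub: "(AA \<inter> HH) \<inter> U \<subseteq> cell \<sigma>0 \<inter> cell \<tau>0"
  proof
    fix p assume p: "p \<in> (AA \<inter> HH) \<inter> U"
    then have s: "p \<in> prob_simplex" unfolding U_def by (auto intro: AA_pos_simplex)
    from p have e: "q 2 p = q 3 p" "q 2 p < q 1 p" by (auto simp: HH_def hh_dot U_def)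
    show "p \<in> cell \<sigma>0 \<inter> cell \<tau>0"
      using opt_\<sigma>0[OF s] opt_\<tau>0[OF s] e by auto
  qed
  have ne: "(AA \<inter> HH) \<inter> U \<noteq> {}" using P_AA(3) P3H P3_q unfolding U_def by auto
  have cv: "convex (AA \<inter> HH)" unfolding HH_def by (intro convex_Int convex_AA convex_hyperplane)
  have "aff_dim ((AA \<inter> HH) \<inter> U) = aff_dim (AA \<inter> HH)" by (rule aff_dim_convex_Int_open[OF cv oU ne])
  then have "aff_dim (AA \<inter> HH) \<le> aff_dim (cell \<sigma>0 \<inter> cell \<tau>0)" using aff_dim_subset[OF sub] by simp
  moreover have "aff_dim (cell \<sigma>0 \<inter> cell \<tau>0) \<le> aff_dim (AA \<inter> HH)" by (rule aff_dim_subset[OF int_sub])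
  ultimately show ?thesis using dAH by simp
qed

lemma P_cells: "P1 \<in> cell \<sigma>0" "P2 \<in> cell \<tau>0" "P3 \<in> cell \<sigma>0" "P3 \<in> cell \<tau>0"
  "EE \<in> cell \<sigma>0" "EE \<in> cell \<tau>0"
proof -
  have s: "P1 \<in> prob_simplex" "P2 \<in> prob_simplex" "P3 \<in> prob_simplex"
    using P_AA P1_q P2_q P3_q by (auto intro: AA_pos_simplex)
  show "P1 \<in> cell \<sigma>0" using P1_q by (intro opt_\<sigma>0 s) auto
  show "P2 \<in> cell \<tau>0" using P2_q by (intro opt_\<tau>0 s) auto
  show "P3 \<in> cell \<sigma>0" using P3_q by (intro opt_\<sigma>0 s) auto
  show "P3 \<in> cell \<tau>0" using P3_q by (intro opt_\<tau>0 s) auto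
  show "EE \<in> cell \<sigma>0" using EE_q by (intro opt_\<sigma>0 EE_simplex) auto
  show "EE \<in> cell \<tau>0" using EE_q by (intro opt_\<tau>0 EE_simplex) auto
qed

lemma neighb: "neighboring \<sigma>0 \<tau>0"
  unfolding neighboring_def pareto_optimal_def
  using \<sigma>0_la \<tau>0_la dim_\<sigma>0 dim_\<tau>0 dim_int P_cells by blast

lemma nplus_top: "\<kappa> \<in> neighborhood_plus \<sigma>0 \<tau>0 \<Longrightarrow> \<kappa> \<in> learner_actions \<and> \<kappa> 1 = 1"
proof -
  assume k: "\<kappa> \<in> neighborhood_plus \<sigma>0 \<tau>0"
  then have la: "\<kappa> \<in> learner_actions" and "EE \<in> cell \<kappa>"
    using P_cells by (auto simp: neighborhood_plus_def)
  then have "loss_vec \<kappa> \<bullet> EE \<le> loss_vec \<sigma>0 \<bullet> EE" using \<sigma>0_la by (auto simp: cell_def)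
  then have "real (\<kappa> 1) \<le> 1" unfolding loss_dot using EE_q by simp
  then show ?thesis using learner_cases[OF la] la by auto
qed

definition WW :: "(real ^ (3 \<Rightarrow> bool)) set" where
  "WW = {v. \<forall>r r'. r 1 = r' 1 \<longrightarrow> v $ r = v $ r'}"

lemma WW_I: "(\<And>r r'. r 1 = r' 1 \<Longrightarrow> v $ r = v $ r') \<Longrightarrow> v \<in> WW"
  unfolding WW_def mem_Collect_eq by (intro allI impI)
lemma WW_D: "v \<in> WW \<Longrightarrow> r 1 = r' 1 \<Longrightarrow> v $ r = v $ r'"
  unfolding WW_def mem_Collect_eq by (elim allE impE)
lemma subspace_WW: "subspace WW"
  unfolding subspace_def
proof (intro conjI ballI allI)
  show "0 \<in> WW" by (rule WW_I) (simp only: zero_index)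
  fix x y assume x: "x \<in> WW" and y: "y \<in> WW"
  show "x + y \<in> WW"
  proof (rule WW_I)
    fix r r' :: "3 \<Rightarrow> bool" assume "r 1 = r' 1"
    then show "(x + y) $ r = (x + y) $ r'" using WW_D[OF x, of r r'] WW_D[OF y, of r r'] by (simp only: vector_add_component)
  qed
next
  fix c x assume x: "x \<in> WW"
  show "c *\<^sub>R x \<in> WW"
  proof (rule WW_I)
    fix r r' :: "3 \<Rightarrow> bool" assume "r 1 = r' 1"
    then show "(c *\<^sub>R x) $ r = (c *\<^sub>R x) $ r'" using WW_D[OF x, of r r'] by (simp only: vector_scaleR_component)
  qed
qed

lemma col_WW:
  assumes "\<kappa> \<in> learner_actions" "\<kappa> 1 = 1"
  shows "col_space (transpose (signal_matrix \<kappa>)) \<subseteq> WW"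
proof -
  have "inv_into UNIV \<kappa> (\<kappa> 1) = 1" using learner_inj[OF assms(1)] by (simp add: inv_into_f_f)
  then have inv: "inv_into UNIV \<kappa> 1 = 1" using assms(2) by simp
  have fb: "feedback \<kappa> r = rel (r 1)" for r by (simp only: feedback_def inv)
  show ?thesis
    unfolding col_space_def
  proof (clarify, rule WW_I)
    fix x and r r' :: "3 \<Rightarrow> bool" assume "r 1 = r' 1"
    then show "(transpose (signal_matrix \<kappa>) *v x) $ r = (transpose (signal_matrix \<kappa>) *v x) $ r'"
      by (simp add: matrix_vector_mult_def transpose_def signal_matrix_def fb)
  qed
qed

lemma diff_not_WW: "loss_vec \<sigma>0 - loss_vec \<tau>0 \<notin> WW"
proof
  assume "loss_vec \<sigma>0 - loss_vec \<tau>0 \<in> WW"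
  then have "(loss_vec \<sigma>0 - loss_vec \<tau>0) $ (\<lambda>k. False) = (loss_vec \<sigma>0 - loss_vec \<tau>0) $ (\<lambda>k. k = 3)"
    by (rule WW_D) (simp add: ne3)
  then show False by (simp add: loss_vec_def sum3 rel_def ne3)
qed

theorem theorem2:
  shows "\<exists>\<sigma> \<tau> :: 3 \<Rightarrow> nat. neighboring \<sigma> \<tau> \<and>
           loss_vec \<sigma> - loss_vec \<tau> \<notin> signal_sum (neighborhood_plus \<sigma> \<tau>)"
proof (intro exI conjI)
  show "neighboring \<sigma>0 \<tau>0" by (rule neighb)
  have "signal_sum (neighborhood_plus \<sigma>0 \<tau>0) \<subseteq> WW"
    unfolding signal_sum_def
    by (rule span_minimal[OF _ subspace_WW]) (use nplus_top col_WW in blast)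
  then show "loss_vec \<sigma>0 - loss_vec \<tau>0 \<notin> signal_sum (neighborhood_plus \<sigma>0 \<tau>0)"
    using diff_not_WW by blast
qed

end
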